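(* Let $M\ge2$, $N,K\ge1$ be integers, $B\in\mathbb R$, and for $n=1,\dots,N$, $k=1,\dots,K$ let $S^{(2)}_{n,k}\ge 0$ and $S^{(3)}_{n,k}>0$ be given real numbers. Consider the problem, over real variables $\{B_{n,k}\}$ (no integrality or nonnegativity constraint), $$\min_{\{B_{n,k}\}}\ \prod_{n=1}^N\prod_{k=1}^K\Big(1+S^{(2)}_{n,k}+\Gamma\!\Big(\tfrac{2M-1}{M-1}\Big)2^{-\frac{B_{n,k}}{M-1}}S^{(3)}_{n,k}\Big)\quad\text{s.t.}\quad \sum_{n=1}^N\sum_{k=1}^K B_{n,k}\le B .$$ Its solution is $$B^\star_{n,k}=\frac{B}{NK}+(M-1)\log_2\!\Big(\frac{S^{(3)}_{n,k}}{1+S^{(2)}_{n,k}}\Big)+\frac{M-1}{NK}\sum_{p=1}^N\sum_{q=1}^K\log_2\!\Big(\frac{1+S^{(2)}_{p,q}}{S^{(3)}_{p,q}}\Big).$$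
   Context: $\Gamma$ denotes the Euler Gamma function. (In the paper, $S^{(2)}_{n,k}$ and $S^{(3)}_{n,k}$ are the normalized intra-cluster and inter-cluster interference powers of user $(n,k)$ and $B_{n,k}$ its number of CSI feedback bits, but the statement is purely about the optimization problem above.) *)

theory Defs
  imports "HOL-Analysis.Analysis"
begin

definition objective :: "nat \<Rightarrow> nat \<Rightarrow> nat \<Rightarrow> (nat \<Rightarrow> nat \<Rightarrow> real) \<Rightarrow> (nat \<Rightarrow> nat \<Rightarrow> real)
    \<Rightarrow> (nat \<Rightarrow> nat \<Rightarrow> real) \<Rightarrow> real" where
  "objective M N K S2 S3 Bv =
     (\<Prod>n\<in>{1..N}. \<Prod>k\<in>{1..K}.
        1 + S2 n k + Gamma ((2 * real M - 1) / (real M - 1))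
              * 2 powr (- Bv n k / (real M - 1)) * S3 n k)"

definition feasible :: "nat \<Rightarrow> nat \<Rightarrow> real \<Rightarrow> (nat \<Rightarrow> nat \<Rightarrow> real) \<Rightarrow> bool" where
  "feasible N K B Bv \<longleftrightarrow> (\<Sum>n\<in>{1..N}. \<Sum>k\<in>{1..K}. Bv n k) \<le> B"

definition Bstar :: "nat \<Rightarrow> nat \<Rightarrow> nat \<Rightarrow> real \<Rightarrow> (nat \<Rightarrow> nat \<Rightarrow> real)
    \<Rightarrow> (nat \<Rightarrow> nat \<Rightarrow> real) \<Rightarrow> nat \<Rightarrow> nat \<Rightarrow> real" where
  "Bstar M N K B S2 S3 n k =
     B / (real N * real K) + (real M - 1) * log 2 (S3 n k / (1 + S2 n k))
     + (real M - 1) / (real N * real K) *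
         (\<Sum>p\<in>{1..N}. \<Sum>q\<in>{1..K}. log 2 ((1 + S2 p q) / S3 p q))"

end

theory Submission
  imports Defs
begin

lemma key_ineq:
  fixes t u :: real
  assumes "t > 0"
  shows "(1+t) * exp (t/(1+t) * u) \<le> 1 + t * exp u"
proof -
  let ?w = "t/(1+t)"
  have w0: "?w \<ge> 0" "?w \<le> 1" using assms by auto
  have "exp ((1 - ?w) *\<^sub>R 0 + ?w *\<^sub>R u) \<le> (1-?w) * exp 0 + ?w * exp u"
    by (rule convex_onD[OF exp_convex]) (use w0 in auto)
  then have "exp (?w*u) \<le> (1-?w) + ?w*exp u" by simp
  then have "(1+t) * exp (?w*u) \<le> (1+t) * ((1-?w) + ?w*exp u)"
    using assms by (intro mult_left_mono) auto
  also have "\<dots> = 1 + t * exp u" using assms by (simp add: field_simps)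
  finally show ?thesis .
qed

lemma term_ineq:
  fixes a c s bs b t :: real
  assumes a: "a > 0" and c: "c > 0" and s: "s > 0" and t: "c * 2 powr (-bs/s) = a*t" and tp: "t > 0"
  shows "(a + c*2 powr(-bs/s)) * exp (t/(1+t) * ((bs - b)*ln 2/s)) \<le> a + c * 2 powr(-b/s)"
proof -
  let ?u = "(bs - b)*ln 2/s"
  have x: "2 powr (-b/s) = 2 powr(-bs/s) * exp ?u"
    unfolding powr_def by (simp add: exp_add[symmetric] field_simps diff_divide_distrib)
  have "(a + c*2 powr(-bs/s)) * exp (t/(1+t) * ?u) = a * ((1+t) * exp (t/(1+t) * ?u))"
    using t by (simp add: algebra_simps)
  also have "\<dots> \<le> a * (1 + t * exp ?u)"
    by (rule mult_left_mono[OF key_ineq[OF tp]]) (use a in simp)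
  also have "\<dots> = a + c * 2 powr(-b/s)"
    using t x by (simp add: algebra_simps)
  finally show ?thesis .
qed

theorem theorem3:
  fixes M N K :: nat and B :: real and S2 S3 :: "nat \<Rightarrow> nat \<Rightarrow> real"
  assumes "M \<ge> 2" and "N \<ge> 1" and "K \<ge> 1"
    and "\<And>n k. n \<in> {1..N} \<Longrightarrow> k \<in> {1..K} \<Longrightarrow> S2 n k \<ge> 0"
    and "\<And>n k. n \<in> {1..N} \<Longrightarrow> k \<in> {1..K} \<Longrightarrow> S3 n k > 0"
  shows "feasible N K B (Bstar M N K B S2 S3)
       \<and> (\<forall>Bv. feasible N K B Bv \<longrightarrow>
             objective M N K S2 S3 (Bstar M N K B S2 S3) \<le> objective M N K S2 S3 Bv)"
proof -
  define s where "s = real M - 1"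
  define T where "T = real N * real K"
  define G where "G = Gamma ((2 * real M - 1) / (real M - 1))"
  define A where "A = (\<lambda>n k. 1 + S2 n k)"
  define L where "L = (\<lambda>n k. log 2 (S3 n k / A n k))"
  define SL where "SL = (\<Sum>p\<in>{1..N}. \<Sum>q\<in>{1..K}. L p q)"
  have s: "s > 0" using assms(1) unfolding s_def by auto
  have T: "T > 0" using assms(2,3) unfolding T_def by auto
  have G: "G > 0" unfolding G_def using assms(1) by (intro Gamma_real_pos) auto
  have A: "\<And>n k. n \<in> {1..N} \<Longrightarrow> k \<in> {1..K} \<Longrightarrow> A n k > 0"
    using assms(4) unfolding A_def by fastforce
  have S3: "\<And>n k. n \<in> {1..N} \<Longrightarrow> k \<in> {1..K} \<Longrightarrow> S3 n k > 0" by (rule assms(5))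
  have neg: "\<And>n k. n \<in> {1..N} \<Longrightarrow> k \<in> {1..K} \<Longrightarrow> log 2 ((1 + S2 n k) / S3 n k) = - L n k"
  proof -
    fix n k assume h: "n \<in> {1..N}" "k \<in> {1..K}"
    show "log 2 ((1 + S2 n k) / S3 n k) = - L n k"
      using A[OF h] S3[OF h] unfolding L_def A_def by (simp add: log_divide)
  qed
  have sumneg: "(\<Sum>p\<in>{1..N}. \<Sum>q\<in>{1..K}. log 2 ((1 + S2 p q) / S3 p q)) = - SL"
    unfolding SL_def by (simp add: neg sum_negf)
  have Bs: "\<And>n k. n \<in> {1..N} \<Longrightarrow> k \<in> {1..K} \<Longrightarrow>
      Bstar M N K B S2 S3 n k = B / T + s * L n k - s / T * SL"
    unfolding Bstar_def using sumneg by (simp add: s_def T_def L_def A_def)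
  have sumB: "(\<Sum>n\<in>{1..N}. \<Sum>k\<in>{1..K}. Bstar M N K B S2 S3 n k) = B"
  proof -
    have "(\<Sum>n\<in>{1..N}. \<Sum>k\<in>{1..K}. Bstar M N K B S2 S3 n k)
        = (\<Sum>n\<in>{1..N}. \<Sum>k\<in>{1..K}. (B / T - s / T * SL) + s * L n k)"
      by (intro sum.cong refl) (simp add: Bs)
    also have "\<dots> = real N * real K * (B / T - s / T * SL) + s * SL"
      by (simp add: sum.distrib sum_distrib_left SL_def)
    also have "\<dots> = T * (B / T - s / T * SL) + s * SL" unfolding T_def by simp
    also have "\<dots> = B" using T by (simp add: field_simps)
    finally show ?thesis .
  qed
  define tst where "tst = G * 2 powr (-(B/T)/s + SL/T)"
  have tst: "tst > 0" unfolding tst_def using G by simp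
  have tprop: "\<And>n k. n \<in> {1..N} \<Longrightarrow> k \<in> {1..K} \<Longrightarrow>
      (G * S3 n k) * 2 powr (- Bstar M N K B S2 S3 n k / s) = A n k * tst"
  proof -
    fix n k assume h: "n \<in> {1..N}" "k \<in> {1..K}"
    have e: "- Bstar M N K B S2 S3 n k / s = (-(B/T)/s + SL/T) - L n k"
      using s by (simp add: Bs[OF h] field_simps)
    have pl: "2 powr L n k = S3 n k / A n k"
      unfolding L_def using A[OF h] S3[OF h] by simp
    have "(G * S3 n k) * 2 powr (- Bstar M N K B S2 S3 n k / s)
        = (G * S3 n k) * (2 powr (-(B/T)/s + SL/T) / 2 powr L n k)"
      unfolding e by (simp only: powr_diff)
    also have "\<dots> = A n k * tst" using A[OF h] S3[OF h] by (simp add: pl tst_def field_simps)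
    finally show "(G * S3 n k) * 2 powr (- Bstar M N K B S2 S3 n k / s) = A n k * tst" .
  qed
  define W where "W = tst / (1 + tst)"
  have W: "W \<ge> 0" unfolding W_def using tst by auto
  have obj: "\<And>Bv. objective M N K S2 S3 Bv = (\<Prod>n\<in>{1..N}. \<Prod>k\<in>{1..K}. A n k + (G * S3 n k) * 2 powr (- Bv n k / s))"
    unfolding objective_def A_def G_def s_def by (simp add: algebra_simps)
  have objpos: "objective M N K S2 S3 (Bstar M N K B S2 S3) \<ge> 0"
    unfolding obj using A S3 G by (intro prod_nonneg add_nonneg_nonneg) (auto intro: less_imp_le)
  have opt: "objective M N K S2 S3 (Bstar M N K B S2 S3) \<le> objective M N K S2 S3 Bv"
    if f: "feasible N K B Bv" for Bv
  proof -
    let ?Bs = "Bstar M N K B S2 S3"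
    define u where "u = (\<lambda>n k. (?Bs n k - Bv n k) * ln 2 / s)"
    have su: "(\<Sum>n\<in>{1..N}. \<Sum>k\<in>{1..K}. u n k) \<ge> 0"
    proof -
      have "(\<Sum>n\<in>{1..N}. \<Sum>k\<in>{1..K}. u n k) = ln 2 / s * ((\<Sum>n\<in>{1..N}. \<Sum>k\<in>{1..K}. ?Bs n k) - (\<Sum>n\<in>{1..N}. \<Sum>k\<in>{1..K}. Bv n k))"
      proof -
        have "\<And>n k. u n k = ln 2 / s * (?Bs n k - Bv n k)" unfolding u_def by simp
        then show ?thesis by (simp only: sum_distrib_left[symmetric] sum_subtractf)
      qed
      also have "\<dots> \<ge> 0" using f s unfolding feasible_def sumB by simp
      finally show ?thesis .
    qed
    have "objective M N K S2 S3 ?Bs \<le> objective M N K S2 S3 ?Bs * exp (W * (\<Sum>n\<in>{1..N}. \<Sum>k\<in>{1..K}. u n k))"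
      using objpos W su by (simp add: mult_le_cancel_left1 zero_le_mult_iff)
    also have "\<dots> = (\<Prod>n\<in>{1..N}. \<Prod>k\<in>{1..K}. (A n k + (G * S3 n k) * 2 powr (- ?Bs n k / s)) * exp (W * u n k))"
      unfolding obj by (simp add: sum_distrib_left exp_sum prod.distrib)
    also have "\<dots> \<le> objective M N K S2 S3 Bv"
      unfolding obj
    proof (intro prod_mono conjI)
      fix n k assume h: "n \<in> {1..N}" "k \<in> {1..K}"
      show "0 \<le> (A n k + (G * S3 n k) * 2 powr (- ?Bs n k / s)) * exp (W * u n k)"
        using A[OF h] S3[OF h] G by (intro mult_nonneg_nonneg add_nonneg_nonneg) auto
      show "(A n k + (G * S3 n k) * 2 powr (- ?Bs n k / s)) * exp (W * u n k)
          \<le> A n k + (G * S3 n k) * 2 powr (- Bv n k / s)"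
        using term_ineq[OF A[OF h] _ s _ tst, of "G * S3 n k" "?Bs n k" "Bv n k"]
          tprop[OF h] G S3[OF h] unfolding W_def u_def by simp
    next
      fix n assume h: "n \<in> {1..N}"
      show "0 \<le> (\<Prod>k\<in>{1..K}. (A n k + (G * S3 n k) * 2 powr (- ?Bs n k / s)) * exp (W * u n k))"
        using A[OF h] S3[OF h] G
        by (intro prod_nonneg mult_nonneg_nonneg add_nonneg_nonneg) (auto intro: less_imp_le)
    qed
    finally show ?thesis .
  qed
  show ?thesis using sumB opt unfolding feasible_def by simp
qed

end
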